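(* Let $\star$ be a $t$-definer, let $n\ge1$ and let $(X_1,d_1^\star),\dots,(X_n,d_n^\star)$ be nonempty $\star$-metric spaces, and let $X=\prod_{i=1}^n X_i$. For $x=(x_i)$, $y=(y_i)\in X$ define $d_T^\star(x,y)=d_1^\star(x_1,y_1)\star\cdots\star d_n^\star(x_n,y_n)$ and $d_{\max}^\star(x,y)=\max_{1\le i\le n}d_i^\star(x_i,y_i)$. Then: (1) $(X,d_T^\star)$ is complete if and only if every $(X_i,d_i^\star)$ is complete; (2) $(X,d_{\max}^\star)$ is complete if and only if every $(X_i,d_i^\star)$ is complete.
   Context: A $t$-definer is a function $\star:[0,\infty)\times[0,\infty)\to[0,\infty)$ such that for all $a,b,c\ge 0$: $a\star b=b\star a$; $a\star(b\star c)=(a\star b)\star c$; if $a\le b$ then $a\star c\le b\star c$; $a\star 0=a$; and $\star$ is continuous in its first variable with respect to the Euclidean topology. Given a nonempty set $Y$, a $\star$-metric on $Y$ is a function $\rho:Y\times Y\to[0,\infty)$ such that for all $x,y,z\in Y$: $\rho(x,y)=0$ iff $x=y$; $\rho(x,y)=\rho(y,x)$; and $\rho(x,y)\le \rho(x,z)\star \rho(z,y)$. Both $d_T^\star$ and $d_{\max}^\star$ are $\star$-metrics on $X$. In $(Y,\rho)$, a sequence $\{x_n\}$ is Cauchy if for every $\epsilon>0$ there is $k$ with $\rho(x_n,x_m)<\epsilon$ for all $m,n\ge k$; it converges to $x$ if for every $\epsilon>0$ there is $k$ with $\rho(x,x_n)<\epsilon$ for $n\ge k$; $(Y,\rho)$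 is complete if every Cauchy sequence converges to a point of $Y$. *)

theory Defs
  imports "HOL-Analysis.Analysis"
begin

text \<open>A t-definer: a binary operation on [0,\<infinity>), modelled as a real function
  whose axioms are required on nonnegative arguments.\<close>
definition t_definer :: "(real \<Rightarrow> real \<Rightarrow> real) \<Rightarrow> bool" where
  "t_definer s \<longleftrightarrow>
     (\<forall>a\<ge>0. \<forall>b\<ge>0. s a b \<ge> 0) \<and>
     (\<forall>a\<ge>0. \<forall>b\<ge>0. s a b = s b a) \<and>
     (\<forall>a\<ge>0. \<forall>b\<ge>0. \<forall>c\<ge>0. s a (s b c) = s (s a b) c) \<and>
     (\<forall>a\<ge>0. \<forall>b\<ge>0. \<forall>c\<ge>0. a \<le> b \<longrightarrow> s a c \<le> s b c) \<and>
     (\<forall>a\<ge>0. s a 0 = a) \<and>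
     (\<forall>b\<ge>0. continuous_on {0..} (\<lambda>a. s a b))"

definition star_metric :: "(real \<Rightarrow> real \<Rightarrow> real) \<Rightarrow> 'a set \<Rightarrow> ('a \<Rightarrow> 'a \<Rightarrow> real) \<Rightarrow> bool" where
  "star_metric s Y \<rho> \<longleftrightarrow>
     (\<forall>x\<in>Y. \<forall>y\<in>Y. \<rho> x y \<ge> 0) \<and>
     (\<forall>x\<in>Y. \<forall>y\<in>Y. \<rho> x y = 0 \<longleftrightarrow> x = y) \<and>
     (\<forall>x\<in>Y. \<forall>y\<in>Y. \<rho> x y = \<rho> y x) \<and>
     (\<forall>x\<in>Y. \<forall>y\<in>Y. \<forall>z\<in>Y. \<rho> x y \<le> s (\<rho> x z) (\<rho> z y))"

definition sm_cauchy :: "'a set \<Rightarrow> ('a \<Rightarrow> 'a \<Rightarrow> real) \<Rightarrow> (nat \<Rightarrow> 'a) \<Rightarrow> bool" where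
  "sm_cauchy Y \<rho> u \<longleftrightarrow> (\<forall>e>0. \<exists>k. \<forall>m\<ge>k. \<forall>n\<ge>k. \<rho> (u n) (u m) < e)"

definition sm_converges :: "'a set \<Rightarrow> ('a \<Rightarrow> 'a \<Rightarrow> real) \<Rightarrow> (nat \<Rightarrow> 'a) \<Rightarrow> 'a \<Rightarrow> bool" where
  "sm_converges Y \<rho> u x \<longleftrightarrow> (\<forall>e>0. \<exists>k. \<forall>n\<ge>k. \<rho> x (u n) < e)"

definition sm_complete :: "'a set \<Rightarrow> ('a \<Rightarrow> 'a \<Rightarrow> real) \<Rightarrow> bool" where
  "sm_complete Y \<rho> \<longleftrightarrow>
     (\<forall>u. (\<forall>n. u n \<in> Y) \<and> sm_cauchy Y \<rho> u \<longrightarrow> (\<exists>x\<in>Y. sm_converges Y \<rho> u x))"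

primrec tfold :: "(real \<Rightarrow> real \<Rightarrow> real) \<Rightarrow> (nat \<Rightarrow> real) \<Rightarrow> nat \<Rightarrow> real" where
  "tfold s f 0 = 0"
| "tfold s f (Suc k) = (if k = 0 then f 1 else s (tfold s f k) (f (Suc k)))"

definition dT :: "(real \<Rightarrow> real \<Rightarrow> real) \<Rightarrow> nat \<Rightarrow> (nat \<Rightarrow> 'a \<Rightarrow> 'a \<Rightarrow> real)
    \<Rightarrow> (nat \<Rightarrow> 'a) \<Rightarrow> (nat \<Rightarrow> 'a) \<Rightarrow> real" where
  "dT s n d x y = tfold s (\<lambda>i. d i (x i) (y i)) n"

definition dmax :: "nat \<Rightarrow> (nat \<Rightarrow> 'a \<Rightarrow> 'a \<Rightarrow> real) \<Rightarrow> (nat \<Rightarrow> 'a) \<Rightarrow> (nat \<Rightarrow> 'a) \<Rightarrow> real" where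
  "dmax n d x y = Max ((\<lambda>i. d i (x i) (y i)) ` {1..n})"

end

theory Submission
  imports Defs
begin

lemma td_facts:
  assumes "t_definer s"
  shows "\<And>a b. a \<ge> 0 \<Longrightarrow> b \<ge> 0 \<Longrightarrow> s a b \<ge> 0"
    and "\<And>a b. a \<ge> 0 \<Longrightarrow> b \<ge> 0 \<Longrightarrow> s a b = s b a"
    and "\<And>a b c. a \<ge> 0 \<Longrightarrow> b \<ge> 0 \<Longrightarrow> c \<ge> 0 \<Longrightarrow> a \<le> b \<Longrightarrow> s a c \<le> s b c"
    and "\<And>a. a \<ge> 0 \<Longrightarrow> s a 0 = a"
    and "\<And>b. b \<ge> 0 \<Longrightarrow> continuous_on {0..} (\<lambda>a. s a b)"
  using assms unfolding t_definer_def by auto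

lemma td_ge_right:
  assumes "t_definer s" "a \<ge> 0" "b \<ge> 0" shows "b \<le> s a b"
proof -
  have "s 0 b \<le> s a b" using td_facts(3)[OF assms(1), of 0 a b] assms by auto
  moreover have "s 0 b = b" using td_facts(2,4)[OF assms(1)] assms by (metis order_refl)
  ultimately show ?thesis by simp
qed

lemma td_ge_left:
  assumes "t_definer s" "a \<ge> 0" "b \<ge> 0" shows "a \<le> s a b"
  using td_ge_right[OF assms(1) assms(3) assms(2)] td_facts(2)[OF assms(1)] assms by metis

lemma tfold_nonneg:
  assumes "t_definer s"
  shows "(\<forall>i\<in>{1..k}. f i \<ge> 0) \<Longrightarrow> tfold s f k \<ge> 0"
proof (induction k)
  case 0 then show ?case by simp
next
  case (Suc k)
  then show ?case using td_facts(1)[OF assms] by auto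
qed

lemma tfold_ge:
  assumes "t_definer s"
  shows "(\<forall>i\<in>{1..k}. f i \<ge> 0) \<Longrightarrow> i \<in> {1..k} \<Longrightarrow> f i \<le> tfold s f k"
proof (induction k)
  case 0 then show ?case by simp
next
  case (Suc k)
  show ?case
  proof (cases "k = 0")
    case True then show ?thesis using Suc by auto
  next
    case False
    have nn: "tfold s f k \<ge> 0" using tfold_nonneg[OF assms, of k f] Suc.prems by auto
    have fs: "f (Suc k) \<ge> 0" using Suc.prems by auto
    show ?thesis
    proof (cases "i = Suc k")
      case True then show ?thesis using False td_ge_right[OF assms nn fs] by simp
    next
      case F2: False
      then have "f i \<le> tfold s f k" using Suc by auto
      also have "\<dots> \<le> tfold s f (Suc k)" using False td_ge_left[OF assms nn fs] by simp
      finally show ?thesis .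
    qed
  qed
qed

lemma td_pair_small:
  assumes "t_definer s" "e > 0"
  shows "\<exists>\<delta>>0. \<forall>a b. 0 \<le> a \<longrightarrow> a < \<delta> \<longrightarrow> 0 \<le> b \<longrightarrow> b < \<delta> \<longrightarrow> s a b < e"
proof -
  define \<epsilon> where "\<epsilon> = e / 2"
  have ep: "\<epsilon> > 0" using assms by (simp add: \<epsilon>_def)
  have "continuous_on {0..} (\<lambda>a. s a \<epsilon>)" using td_facts(5)[OF assms(1)] ep by simp
  then obtain \<eta> where eta: "\<eta> > 0" "\<forall>x'\<in>{0..}. dist x' 0 < \<eta> \<longrightarrow> dist (s x' \<epsilon>) (s 0 \<epsilon>) < \<epsilon>"
    unfolding continuous_on_iff using ep by (metis atLeast_iff order_refl)
  have s0: "s 0 \<epsilon> = \<epsilon>" using td_facts(2,4)[OF assms(1)] ep by (metis less_imp_le order_refl)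
  show ?thesis
  proof (intro exI[of _ "min \<eta> \<epsilon>"] conjI allI impI)
    show "min \<eta> \<epsilon> > 0" using eta ep by simp
    fix a b :: real assume h: "0 \<le> a" "a < min \<eta> \<epsilon>" "0 \<le> b" "b < min \<eta> \<epsilon>"
    have "s a b = s b a" using td_facts(2)[OF assms(1)] h by simp
    also have "\<dots> \<le> s \<epsilon> a" using td_facts(3)[OF assms(1), of b \<epsilon> a] h ep by simp
    also have "\<dots> = s a \<epsilon>" using td_facts(2)[OF assms(1)] h ep by simp
    also have "\<dots> < e"
    proof -
      have "dist (s a \<epsilon>) \<epsilon> < \<epsilon>" using eta(2) h s0 by (auto simp: dist_real_def)
      then show ?thesis unfolding dist_real_def \<epsilon>_def by linarith
    qed
    finally show "s a b < e" .
  qed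
qed

lemma tfold_small:
  assumes "t_definer s"
  shows "e > 0 \<Longrightarrow> \<exists>\<delta>>0. \<forall>f. (\<forall>i\<in>{1..k}. 0 \<le> f i \<and> f i < \<delta>) \<longrightarrow> tfold s f k < e"
proof (induction k arbitrary: e)
  case 0 then show ?case by (auto intro: exI[of _ 1])
next
  case (Suc k)
  show ?case
  proof (cases "k = 0")
    case True then show ?thesis using Suc.prems by (auto intro!: exI[of _ e])
  next
    case False
    obtain \<delta>1 where d1: "\<delta>1 > 0" "\<forall>a b. 0 \<le> a \<longrightarrow> a < \<delta>1 \<longrightarrow> 0 \<le> b \<longrightarrow> b < \<delta>1 \<longrightarrow> s a b < e"
      using td_pair_small[OF assms Suc.prems] by blast
    obtain \<delta>2 where d2: "\<delta>2 > 0" "\<forall>f. (\<forall>i\<in>{1..k}. 0 \<le> f i \<and> f i < \<delta>2) \<longrightarrow> tfold s f k < \<delta>1"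
      using Suc.IH[OF d1(1)] by blast
    show ?thesis
    proof (intro exI[of _ "min \<delta>1 \<delta>2"] conjI allI impI)
      show "min \<delta>1 \<delta>2 > 0" using d1 d2 by simp
      fix f assume h: "\<forall>i\<in>{1..Suc k}. 0 \<le> f i \<and> f i < min \<delta>1 \<delta>2"
      have a: "tfold s f k < \<delta>1" using d2(2) h by auto
      have b: "tfold s f k \<ge> 0" using tfold_nonneg[OF assms, of k f] h by auto
      have c: "0 \<le> f (Suc k)" "f (Suc k) < \<delta>1" using h by auto
      show "tfold s f (Suc k) < e" using d1(2) a b c False by simp
    qed
  qed
qed

lemma generic_complete:
  fixes X :: "nat \<Rightarrow> 'a set" and d :: "nat \<Rightarrow> 'a \<Rightarrow> 'a \<Rightarrow> real" and D
  assumes ne: "\<And>i. i \<in> {1..n} \<Longrightarrow> X i \<noteq> {}"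
    and sm: "\<And>i. i \<in> {1..n} \<Longrightarrow> star_metric s (X i) (d i)"
    and A: "\<And>x y i. x \<in> PiE {1..n} X \<Longrightarrow> y \<in> PiE {1..n} X \<Longrightarrow> i \<in> {1..n} \<Longrightarrow> d i (x i) (y i) \<le> D x y"
    and B: "\<And>e. e > 0 \<Longrightarrow> \<exists>\<delta>>0. \<forall>x\<in>PiE {1..n} X. \<forall>y\<in>PiE {1..n} X.
               (\<forall>i\<in>{1..n}. d i (x i) (y i) < \<delta>) \<longrightarrow> D x y < e"
  shows "sm_complete (PiE {1..n} X) D \<longleftrightarrow> (\<forall>i\<in>{1..n}. sm_complete (X i) (d i))"
proof
  assume C: "sm_complete (PiE {1..n} X) D"
  show "\<forall>i\<in>{1..n}. sm_complete (X i) (d i)"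
  proof (intro ballI)
    fix i0 assume i0: "i0 \<in> {1..n}"
    show "sm_complete (X i0) (d i0)" unfolding sm_complete_def
    proof (intro allI impI)
      fix v assume hv: "(\<forall>k. v k \<in> X i0) \<and> sm_cauchy (X i0) (d i0) v"
      define p where "p = restrict (\<lambda>i. SOME z. z \<in> X i) {1..n}"
      have p: "p \<in> PiE {1..n} X" unfolding p_def using ne by (auto simp: some_in_eq)
      define u where "u = (\<lambda>k. p(i0 := v k))"
      have u: "\<And>k. u k \<in> PiE {1..n} X" using p hv i0 unfolding u_def PiE_def Pi_def extensional_def by auto
      have zero: "\<And>i z. i \<in> {1..n} \<Longrightarrow> z \<in> X i \<Longrightarrow> d i z z = 0"
        using sm unfolding star_metric_def by blast
      have "sm_cauchy (PiE {1..n} X) D u" unfolding sm_cauchy_def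
      proof (intro allI impI)
        fix e :: real assume e: "e > 0"
        obtain \<delta> where dl: "\<delta> > 0" "\<forall>x\<in>PiE {1..n} X. \<forall>y\<in>PiE {1..n} X.
               (\<forall>i\<in>{1..n}. d i (x i) (y i) < \<delta>) \<longrightarrow> D x y < e" using B[OF e] by blast
        obtain k where k: "\<forall>m\<ge>k. \<forall>n\<ge>k. d i0 (v n) (v m) < \<delta>"
          using hv dl(1) unfolding sm_cauchy_def by blast
        show "\<exists>k. \<forall>m\<ge>k. \<forall>na\<ge>k. D (u na) (u m) < e"
        proof (intro exI[of _ k] allI impI)
          fix m na assume "m \<ge> k" "na \<ge> k"
          have "\<forall>i\<in>{1..n}. d i (u na i) (u m i) < \<delta>"
          proof
            fix i assume i: "i \<in> {1..n}"
            show "d i (u na i) (u m i) < \<delta>"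
            proof (cases "i = i0")
              case True then show ?thesis using k \<open>m \<ge> k\<close> \<open>na \<ge> k\<close> by (simp add: u_def)
            next
              case False
              have "p i \<in> X i" using p i by auto
              then show ?thesis using False zero[OF i] dl(1) by (simp add: u_def)
            qed
          qed
          then show "D (u na) (u m) < e" using dl(2) u by blast
        qed
      qed
      then obtain x where x: "x \<in> PiE {1..n} X" "sm_converges (PiE {1..n} X) D u x"
        using C u unfolding sm_complete_def by blast
      have "sm_converges (X i0) (d i0) v (x i0)" unfolding sm_converges_def
      proof (intro allI impI)
        fix e :: real assume "e > 0"
        then obtain k where k: "\<forall>n\<ge>k. D x (u n) < e" using x(2) unfolding sm_converges_def by blast
        show "\<exists>k. \<forall>n\<ge>k. d i0 (x i0) (v n) < e"
        proof (intro exI[of _ k] allI impI)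
          fix na assume "na \<ge> k"
          have "d i0 (x i0) (u na i0) \<le> D x (u na)" using A[OF x(1) u i0] .
          then show "d i0 (x i0) (v na) < e" using k \<open>na \<ge> k\<close> by (simp add: u_def) (smt (verit))
        qed
      qed
      moreover have "x i0 \<in> X i0" using x(1) i0 by auto
      ultimately show "\<exists>x\<in>X i0. sm_converges (X i0) (d i0) v x" by blast
    qed
  qed
next
  assume C: "\<forall>i\<in>{1..n}. sm_complete (X i) (d i)"
  show "sm_complete (PiE {1..n} X) D" unfolding sm_complete_def
  proof (intro allI impI)
    fix u assume hu: "(\<forall>k. u k \<in> PiE {1..n} X) \<and> sm_cauchy (PiE {1..n} X) D u"
    have ex: "\<exists>z\<in>X i. sm_converges (X i) (d i) (\<lambda>k. u k i) z" if i: "i \<in> {1..n}" for i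
    proof -
      have "\<forall>k. u k i \<in> X i" using hu i by (meson PiE_mem)
      moreover have "sm_cauchy (X i) (d i) (\<lambda>k. u k i)" unfolding sm_cauchy_def
      proof (intro allI impI)
        fix e :: real assume "e > 0"
        then obtain k where k: "\<forall>m\<ge>k. \<forall>n\<ge>k. D (u n) (u m) < e" using hu unfolding sm_cauchy_def by blast
        show "\<exists>k. \<forall>m\<ge>k. \<forall>n\<ge>k. d i (u n i) (u m i) < e"
          using k A hu i by (meson order_le_less_trans)
      qed
      moreover have "sm_complete (X i) (d i)" using C i by blast
      ultimately show ?thesis unfolding sm_complete_def by (elim allE[of _ "\<lambda>k. u k i"]) blast
    qed
    define x where "x = restrict (\<lambda>i. SOME z. z \<in> X i \<and> sm_converges (X i) (d i) (\<lambda>k. u k i) z) {1..n}"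
    have xi: "x i \<in> X i \<and> sm_converges (X i) (d i) (\<lambda>k. u k i) (x i)" if "i \<in> {1..n}" for i
      using someI_ex[OF ex[OF that, unfolded Bex_def]] that unfolding x_def by simp
    have x: "x \<in> PiE {1..n} X" using xi unfolding x_def PiE_def Pi_def by auto
    have "sm_converges (PiE {1..n} X) D u x" unfolding sm_converges_def
    proof (intro allI impI)
      fix e :: real assume e: "e > 0"
      obtain \<delta> where dl: "\<delta> > 0" "\<forall>x\<in>PiE {1..n} X. \<forall>y\<in>PiE {1..n} X.
               (\<forall>i\<in>{1..n}. d i (x i) (y i) < \<delta>) \<longrightarrow> D x y < e" using B[OF e] by blast
      have "\<forall>i\<in>{1..n}. \<exists>k. \<forall>m\<ge>k. d i (x i) (u m i) < \<delta>"
        using xi dl(1) unfolding sm_converges_def by blast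
      then obtain K where K: "\<forall>i\<in>{1..n}. \<forall>m\<ge>K i. d i (x i) (u m i) < \<delta>" by metis
      show "\<exists>k. \<forall>m\<ge>k. D x (u m) < e"
      proof (intro exI[of _ "Max (K ` {1..n})"] allI impI)
        fix m assume m: "m \<ge> Max (K ` {1..n})"
        have "\<forall>i\<in>{1..n}. d i (x i) (u m i) < \<delta>"
        proof
          fix i assume i: "i \<in> {1..n}"
          have "K i \<le> Max (K ` {1..n})" using i by simp
          then show "d i (x i) (u m i) < \<delta>" using K i m by auto
        qed
        then show "D x (u m) < e" using dl(2) x hu by blast
      qed
    qed
    then show "\<exists>x\<in>PiE {1..n} X. sm_converges (PiE {1..n} X) D u x" using x by blast
  qed
qed

theorem theorem4p12:
  fixes s :: "real \<Rightarrow> real \<Rightarrow> real" and n :: nat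
    and X :: "nat \<Rightarrow> 'a set" and d :: "nat \<Rightarrow> 'a \<Rightarrow> 'a \<Rightarrow> real"
  assumes "t_definer s" and "n \<ge> 1"
    and "\<And>i. i \<in> {1..n} \<Longrightarrow> X i \<noteq> {}"
    and "\<And>i. i \<in> {1..n} \<Longrightarrow> star_metric s (X i) (d i)"
  shows "(sm_complete (PiE {1..n} X) (dT s n d) \<longleftrightarrow> (\<forall>i\<in>{1..n}. sm_complete (X i) (d i)))
     \<and> (sm_complete (PiE {1..n} X) (dmax n d) \<longleftrightarrow> (\<forall>i\<in>{1..n}. sm_complete (X i) (d i)))"
proof
  have nn: "\<And>x y i. x \<in> PiE {1..n} X \<Longrightarrow> y \<in> PiE {1..n} X \<Longrightarrow> i \<in> {1..n} \<Longrightarrow> d i (x i) (y i) \<ge> 0"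
    using assms(4) unfolding star_metric_def by (meson PiE_mem)
  show "sm_complete (PiE {1..n} X) (dT s n d) \<longleftrightarrow> (\<forall>i\<in>{1..n}. sm_complete (X i) (d i))"
  proof (rule generic_complete[OF assms(3,4)])
    fix x y i assume h: "x \<in> PiE {1..n} X" "y \<in> PiE {1..n} X" "i \<in> {1..n}"
    show "d i (x i) (y i) \<le> dT s n d x y" unfolding dT_def
      using tfold_ge[OF assms(1), of n "\<lambda>i. d i (x i) (y i)" i] nn h by auto
  next
    fix e :: real assume "e > 0"
    then obtain \<delta> where dl: "\<delta> > 0" "\<forall>f. (\<forall>i\<in>{1..n}. 0 \<le> f i \<and> f i < \<delta>) \<longrightarrow> tfold s f n < e"
      using tfold_small[OF assms(1)] by blast
    show "\<exists>\<delta>>0. \<forall>x\<in>PiE {1..n} X. \<forall>y\<in>PiE {1..n} X.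
               (\<forall>i\<in>{1..n}. d i (x i) (y i) < \<delta>) \<longrightarrow> dT s n d x y < e"
      unfolding dT_def using dl nn by (intro exI[of _ \<delta>]) auto
  qed
  show "sm_complete (PiE {1..n} X) (dmax n d) \<longleftrightarrow> (\<forall>i\<in>{1..n}. sm_complete (X i) (d i))"
  proof (rule generic_complete[OF assms(3,4)])
    fix x y i assume h: "x \<in> PiE {1..n} X" "y \<in> PiE {1..n} X" "i \<in> {1..n}"
    show "d i (x i) (y i) \<le> dmax n d x y" unfolding dmax_def using h by (intro Max_ge) auto
  next
    fix e :: real assume "e > 0"
    then show "\<exists>\<delta>>0. \<forall>x\<in>PiE {1..n} X. \<forall>y\<in>PiE {1..n} X.
               (\<forall>i\<in>{1..n}. d i (x i) (y i) < \<delta>) \<longrightarrow> dmax n d x y < e"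
      unfolding dmax_def using assms(2) by (intro exI[of _ e]) auto
  qed
qed

end
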